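(* Every quilt-affine function $g:\mathbb{N}^d\to\mathbb{N}$ (i.e. quilt-affine with nonnegative values) is obliviously-computable.
   Context: A function $g:\mathbb{N}^d\to\mathbb{Z}$ is quilt-affine if it is nondecreasing (componentwise order) and there exist $p\in\mathbb{N}_+$, $\vec{\nabla}\in\mathbb{Q}^d_{\ge0}$ and $B:\mathbb{Z}^d/p\mathbb{Z}^d\to\mathbb{Q}$ with $g(\vec{x})=\vec{\nabla}\cdot\vec{x}+B(\vec{x}\bmod p)$ for all $\vec{x}$, where $\vec{x}\bmod p$ is the class $\{\vec{x}+p\vec{z}:\vec{z}\in\mathbb{Z}^d\}$. A chemical reaction network (CRN) is a pair $(\mathcal{S},\mathcal{R})$ of a finite set of species and a finite set of reactions $(\vec{R},\vec{P})\in\mathbb{N}^{\mathcal{S}}\times\mathbb{N}^{\mathcal{S}}$. A configuration is $\vec{C}\in\mathbb{N}^{\mathcal{S}}$; a reaction is applicable if $\vec{R}\le\vec{C}$ and yields $\vec{C}-\vec{R}+\vec{P}$; reachability is via finite sequences of applicable reactions. To compute $g:\mathbb{N}^d\to\mathbb{N}$ the CRN has input species $X_1,\ldots,X_d$, output species $Y$, leader species $L$; the initial configuration $\vec{I}_{\vec{x}}$ has $\vec{x}(i)$ copies of $X_i$, one $L$, nothing else. $\vec{C}$ is stable if all configurations reachable from it have the same count of $Y$. The CRN stably computes $g$ if for every $\vec{x}$ and every $\vec{C}$ reachable from $\vec{I}_{\vec{x}}$ some stable $\vec{O}$ reachable from $\vec{C}$ has $\vec{O}(Y)=g(\vec{x})$.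 The CRN is output-oblivious if $Y$ is never a reactant; a function is obliviously-computable if stably computed by an output-oblivious CRN. *)

theory Defs
  imports Main "HOL.Rat"
begin

text \<open>Points of N^d are represented as functions nat => nat vanishing outside {..<d}.\<close>
definition vecs :: "nat \<Rightarrow> (nat \<Rightarrow> nat) set" where
  "vecs d = {x. \<forall>i\<ge>d. x i = 0}"

text \<open>Quilt-affine (with values in N). B is a function of the residue class of x mod p,
  represented by the componentwise residue vector.\<close>
definition quilt_affine :: "nat \<Rightarrow> ((nat \<Rightarrow> nat) \<Rightarrow> nat) \<Rightarrow> bool" where
  "quilt_affine d g \<longleftrightarrow>
     (\<forall>x\<in>vecs d. \<forall>y\<in>vecs d. x \<le> y \<longrightarrow> g x \<le> g y) \<and>
     (\<exists>(p::nat) (grad::nat \<Rightarrow> rat) (B::(nat \<Rightarrow> nat) \<Rightarrow> rat).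
        p > 0 \<and> (\<forall>i<d. grad i \<ge> 0) \<and>
        (\<forall>x\<in>vecs d. of_nat (g x) = (\<Sum>i<d. grad i * of_nat (x i)) + B (\<lambda>i. x i mod p)))"

type_synonym config = "nat \<Rightarrow> nat"
type_synonym reaction = "config \<times> config"

definition crn_wf :: "nat set \<Rightarrow> reaction set \<Rightarrow> bool" where
  "crn_wf S R \<longleftrightarrow> finite S \<and> finite R \<and>
     (\<forall>(r, p)\<in>R. \<forall>s. s \<notin> S \<longrightarrow> r s = 0 \<and> p s = 0)"

definition crn_step :: "reaction set \<Rightarrow> config \<Rightarrow> config \<Rightarrow> bool" where
  "crn_step R C C' \<longleftrightarrow> (\<exists>(r, p)\<in>R. r \<le> C \<and> C' = (\<lambda>s. C s - r s + p s))"

definition reachable :: "reaction set \<Rightarrow> config \<Rightarrow> config \<Rightarrow> bool" where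
  "reachable R = (crn_step R)\<^sup>*\<^sup>*"

definition stable :: "reaction set \<Rightarrow> nat \<Rightarrow> config \<Rightarrow> bool" where
  "stable R Y C \<longleftrightarrow> (\<forall>C'. reachable R C C' \<longrightarrow> C' Y = C Y)"

definition init_config :: "nat \<Rightarrow> (nat \<Rightarrow> nat) \<Rightarrow> nat \<Rightarrow> (nat \<Rightarrow> nat) \<Rightarrow> config" where
  "init_config d X L x = (\<lambda>s. (if s = L then 1 else 0) + (\<Sum>i<d. if X i = s then x i else 0))"

definition stably_computes ::
  "nat set \<Rightarrow> reaction set \<Rightarrow> nat \<Rightarrow> (nat \<Rightarrow> nat) \<Rightarrow> nat \<Rightarrow> nat \<Rightarrow> ((nat \<Rightarrow> nat) \<Rightarrow> nat) \<Rightarrow> bool" where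
  "stably_computes S R d X Y L g \<longleftrightarrow>
     crn_wf S R \<and> X ` {..<d} \<subseteq> S \<and> inj_on X {..<d} \<and> Y \<in> S \<and> L \<in> S \<and>
     Y \<notin> X ` {..<d} \<and> L \<notin> X ` {..<d} \<and> Y \<noteq> L \<and>
     (\<forall>x\<in>vecs d. \<forall>C. reachable R (init_config d X L x) C \<longrightarrow>
        (\<exists>D. reachable R C D \<and> stable R Y D \<and> D Y = g x))"

definition output_oblivious :: "reaction set \<Rightarrow> nat \<Rightarrow> bool" where
  "output_oblivious R Y \<longleftrightarrow> (\<forall>(r, p)\<in>R. r Y = 0)"

definition obliviously_computable :: "nat \<Rightarrow> ((nat \<Rightarrow> nat) \<Rightarrow> nat) \<Rightarrow> bool" where
  "obliviously_computable d g \<longleftrightarrow>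
     (\<exists>S R X Y L. output_oblivious R Y \<and> stably_computes S R d X Y L g)"

end

theory Submission
  imports Defs
begin

definition resA :: "nat \<Rightarrow> nat \<Rightarrow> (nat \<Rightarrow> nat) set" where
  "resA d p = {r. (\<forall>i\<ge>d. r i = 0) \<and> (\<forall>i. r i < p)}"

lemma finite_resA: "finite (resA d p)"
proof (rule inj_on_finite[where f = "\<lambda>r. map r [0..<d]" and B = "{xs. set xs \<subseteq> {..<p} \<and> length xs = d}"])
  show "inj_on (\<lambda>r. map r [0..<d]) (resA d p)"
  proof (rule inj_onI)
    fix r r' assume r: "r \<in> resA d p" and r': "r' \<in> resA d p" and e: "map r [0..<d] = map r' [0..<d]"
    show "r = r'"
    proof
      fix i show "r i = r' i"
      proof (cases "i < d")
        case True
        then show ?thesis using arg_cong[OF e, of "\<lambda>xs. xs ! i"] by simp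
      next
        case False
        then show ?thesis using r r' by (simp add: resA_def)
      qed
    qed
  qed
  show "(\<lambda>r. map r [0..<d]) ` resA d p \<subseteq> {xs. set xs \<subseteq> {..<p} \<and> length xs = d}"
    by (auto simp: resA_def)
  show "finite {xs. set xs \<subseteq> {..<p} \<and> length xs = d}"
    by (rule finite_lists_length_eq) simp
qed

locale qa =
  fixes d :: nat and g :: "(nat\<Rightarrow>nat)\<Rightarrow>nat" and p :: nat
    and grad :: "nat \<Rightarrow> rat" and B :: "(nat \<Rightarrow> nat) \<Rightarrow> rat" and f :: "(nat\<Rightarrow>nat)\<Rightarrow>nat"
  assumes mono: "\<forall>x\<in>vecs d. \<forall>y\<in>vecs d. x \<le> y \<longrightarrow> g x \<le> g y"
    and ppos: "p > 0"
    and eq: "\<forall>x\<in>vecs d. of_nat (g x) = (\<Sum>i<d. grad i * of_nat (x i)) + B (\<lambda>i. x i mod p)"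
    and finj: "inj_on f (resA d p)"
begin

definition Lst :: "(nat\<Rightarrow>nat) \<Rightarrow> nat" where "Lst r = d + 2 + f r"
definition modv :: "(nat\<Rightarrow>nat) \<Rightarrow> nat \<Rightarrow> nat" where "modv c = (\<lambda>i. c i mod p)"
definition conf :: "(nat\<Rightarrow>nat) \<Rightarrow> (nat\<Rightarrow>nat) \<Rightarrow> config" where
  "conf x c = (\<lambda>s. if s = 0 then g c else if s = Lst (modv c) then 1
      else if 2 \<le> s \<and> s < d + 2 then x (s-2) - c (s-2) else 0)"
definition ini :: "(nat\<Rightarrow>nat) \<Rightarrow> config" where
  "ini x = (\<lambda>s. if s = 1 then 1 else if 2 \<le> s \<and> s < d + 2 then x (s-2) else 0)"
definition start :: reaction where
  "start = ((\<lambda>s. if s = 1 then 1 else 0),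
            (\<lambda>s. if s = Lst (\<lambda>_. 0) then 1 else if s = 0 then g (\<lambda>_. 0) else 0))"
definition nxt :: "(nat\<Rightarrow>nat) \<Rightarrow> nat \<Rightarrow> nat \<Rightarrow> nat" where
  "nxt r i = r(i := (r i + 1) mod p)"
definition rx :: "(nat\<Rightarrow>nat) \<Rightarrow> nat \<Rightarrow> reaction" where
  "rx r i = ((\<lambda>s. if s = Lst r \<or> s = i + 2 then 1 else 0),
             (\<lambda>s. if s = Lst (nxt r i) then 1 else if s = 0 then g (r(i := r i + 1)) - g r else 0))"
definition Rs :: "reaction set" where
  "Rs = insert start ((\<lambda>(r,i). rx r i) ` (resA d p \<times> {..<d}))"
definition Ss :: "nat set" where
  "Ss = {0..<d+2} \<union> Lst ` resA d p"
definition Inv :: "(nat\<Rightarrow>nat) \<Rightarrow> config \<Rightarrow> bool" where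
  "Inv x C \<longleftrightarrow> C = ini x \<or> (\<exists>c\<in>vecs d. c \<le> x \<and> C = conf x c)"

lemma Lst_ge[simp]: "d + 2 \<le> Lst r" by (simp add: Lst_def)
lemma Lst_ne[simp]: "Lst r \<noteq> 0" "Lst r \<noteq> 1" "Lst r \<noteq> Suc 0" "0 \<noteq> Lst r" "1 \<noteq> Lst r" "Suc 0 \<noteq> Lst r"
  "\<not> Lst r < d + 2" "\<not> Lst r < Suc (Suc d)" using Lst_ge[of r] by linarith+
lemma Lst_ne2[simp]: "i < d \<Longrightarrow> Suc (Suc i) \<noteq> Lst r" "i < d \<Longrightarrow> Lst r \<noteq> Suc (Suc i)"
  using Lst_ge[of r] by linarith+
lemma modv_A: "c \<in> vecs d \<Longrightarrow> modv c \<in> resA d p"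
  using ppos by (simp add: modv_def resA_def vecs_def)
lemma zero_A: "(\<lambda>_. 0) \<in> resA d p" using ppos by (simp add: resA_def)
lemma nxt_A: "r \<in> resA d p \<Longrightarrow> i < d \<Longrightarrow> nxt r i \<in> resA d p"
  using ppos by (simp add: nxt_def resA_def)
lemma Lst_inj: "r \<in> resA d p \<Longrightarrow> r' \<in> resA d p \<Longrightarrow> Lst r = Lst r' \<Longrightarrow> r = r'"
  using finj by (simp add: Lst_def inj_on_def)

lemma sum_upd:
  assumes "i < d"
  shows "(\<Sum>j<d. grad j * of_nat ((y(i := y i + 1)) j)) = (\<Sum>j<d. grad j * of_nat (y j)) + grad i"
proof -
  have "(\<Sum>j<d. grad j * of_nat ((y(i := y i + 1)) j)) = (\<Sum>j<d. grad j * of_nat (y j) + (if j = i then grad i else 0))"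
    by (rule sum.cong) (auto simp: algebra_simps)
  also have "\<dots> = (\<Sum>j<d. grad j * of_nat (y j)) + grad i"
    using assms by (simp add: sum.distrib)
  finally show ?thesis .
qed

lemma key:
  assumes x: "x \<in> vecs d" and i: "i < d"
  shows "g (x(i := x i + 1)) = g x + (g ((modv x)(i := modv x i + 1)) - g (modv x))"
proof -
  define x' where "x' = x(i := x i + 1)"
  define m where "m = modv x"
  define m' where "m' = m(i := m i + 1)"
  have vx': "x' \<in> vecs d" using x i by (auto simp: vecs_def x'_def)
  have vm: "m \<in> vecs d" using x by (auto simp: vecs_def m_def modv_def)
  have vm': "m' \<in> vecs d" using vm i by (auto simp: vecs_def m'_def)
  have e1: "(\<lambda>j. x' j mod p) = (\<lambda>j. m' j mod p)"
    by (auto simp: x'_def m'_def m_def modv_def mod_Suc_eq)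
  have e2: "(\<lambda>j. m j mod p) = (\<lambda>j. x j mod p)"
    by (auto simp: m_def modv_def)
  have gx': "rat_of_nat (g x') = (\<Sum>j<d. grad j * of_nat (x j)) + grad i + B (\<lambda>j. x' j mod p)"
    using eq vx' sum_upd[OF i, of x] by (simp add: x'_def)
  have gx: "rat_of_nat (g x) = (\<Sum>j<d. grad j * of_nat (x j)) + B (\<lambda>j. x j mod p)"
    using eq x by simp
  have gm': "rat_of_nat (g m') = (\<Sum>j<d. grad j * of_nat (m j)) + grad i + B (\<lambda>j. m' j mod p)"
    using eq vm' sum_upd[OF i, of m] by (simp add: m'_def)
  have gm: "rat_of_nat (g m) = (\<Sum>j<d. grad j * of_nat (m j)) + B (\<lambda>j. m j mod p)"
    using eq vm by simp
  have "rat_of_nat (g x') + of_nat (g m) = of_nat (g x) + of_nat (g m')"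
    using gx' gx gm' gm e1 e2 by simp
  then have n: "g x' + g m = g x + g m'"
    by (metis of_nat_add of_nat_eq_iff)
  have "m \<le> m'" by (simp add: m'_def le_fun_def)
  then have "g m \<le> g m'" using mono vm vm' by blast
  then show ?thesis using n by (simp add: x'_def m'_def m_def)
qed

lemma step_start:
  assumes x: "x \<in> vecs d"
  shows "fst start \<le> ini x \<and> conf x (\<lambda>_. 0) = (\<lambda>s. ini x s - fst start s + snd start s)"
proof
  show "fst start \<le> ini x" by (auto simp: start_def ini_def le_fun_def)
  have z: "modv (\<lambda>_. 0) = (\<lambda>_. 0)" by (simp add: modv_def)
  show "conf x (\<lambda>_. 0) = (\<lambda>s. ini x s - fst start s + snd start s)"
  proof
    fix s
    show "conf x (\<lambda>_. 0) s = ini x s - fst start s + snd start s"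
      using Lst_ge[of "\<lambda>_. 0"] by (auto simp: conf_def ini_def start_def z)
  qed
qed

lemma step_rx:
  assumes c: "c \<in> vecs d" and i: "i < d" and lt: "c i < x i"
  shows "fst (rx (modv c) i) \<le> conf x c \<and>
     conf x (c(i := c i + 1)) = (\<lambda>s. conf x c s - fst (rx (modv c) i) s + snd (rx (modv c) i) s)"
proof
  have ne: "Lst r \<noteq> i + 2" for r using Lst_ge[of r] i by linarith
  show "fst (rx (modv c) i) \<le> conf x c"
    using lt i ne by (auto simp: rx_def conf_def le_fun_def)
  have mv: "modv (c(i := c i + 1)) = nxt (modv c) i"
    by (auto simp: modv_def nxt_def mod_Suc_eq)
  then have mv2: "modv (c(i := Suc (c i))) = nxt (modv c) i" by simp
  have kk: "g (c(i := c i + 1)) = g c + (g ((modv c)(i := modv c i + 1)) - g (modv c))"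
    by (rule key[OF c i])
  show "conf x (c(i := c i + 1)) = (\<lambda>s. conf x c s - fst (rx (modv c) i) s + snd (rx (modv c) i) s)"
  proof
    fix s
    show "conf x (c(i := c i + 1)) s = conf x c s - fst (rx (modv c) i) s + snd (rx (modv c) i) s"
    proof (cases "s = 0")
      case True then show ?thesis using kk by (simp add: conf_def rx_def)
    next
      case s0: False
      show ?thesis
      proof (cases "s = Lst (nxt (modv c) i)")
        case True then show ?thesis using s0 ne by (auto simp: conf_def rx_def mv mv2)
      next
        case sn: False
        show ?thesis
        proof (cases "s = Lst (modv c)")
          case True then show ?thesis using s0 sn ne Lst_ge[of "modv c"] by (auto simp: conf_def rx_def mv mv2)
        next
          case False then show ?thesis using s0 sn ne lt by (auto simp: conf_def rx_def mv mv2)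
        qed
      qed
    qed
  qed
qed

lemma inv_step:
  assumes x: "x \<in> vecs d" and I: "Inv x C" and st: "crn_step Rs C C'"
  shows "Inv x C'"
proof -
  obtain r q where rq: "(r, q) \<in> Rs" and le: "r \<le> C" and C': "C' = (\<lambda>s. C s - r s + q s)"
    using st by (auto simp: crn_step_def)
  show ?thesis
  proof (cases "(r, q) = start")
    case True
    have "C 1 \<ge> 1" using le True by (auto simp: start_def le_fun_def dest: spec[of _ 1])
    then have "C = ini x" using I by (auto simp: Inv_def conf_def)
    moreover have "r = fst start" "q = snd start" using True by (metis fst_conv, metis snd_conv)
    ultimately have "C' = conf x (\<lambda>_. 0)" using step_start[OF x] C' by simp
    moreover have "(\<lambda>_. 0) \<in> vecs d" by (simp add: vecs_def)
    moreover have "(\<lambda>_. 0::nat) \<le> x" by (simp add: le_fun_def)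
    ultimately show ?thesis by (auto simp: Inv_def)
  next
    case False
    then obtain a i where a: "a \<in> resA d p" and i: "i < d" and rqe: "(r, q) = rx a i"
      using rq by (auto simp: Rs_def)
    have ne: "Lst b \<noteq> i + 2" for b using Lst_ge[of b] i by linarith
    have h1: "C (Lst a) \<ge> 1" using le rqe by (auto simp: rx_def le_fun_def dest: spec[of _ "Lst a"])
    have h2: "C (i + 2) \<ge> 1" using le rqe by (auto simp: rx_def le_fun_def dest: spec[of _ "i+2"])
    have "C \<noteq> ini x" using h1 Lst_ge[of a] by (auto simp: ini_def)
    then obtain c where c: "c \<in> vecs d" "c \<le> x" and Cc: "C = conf x c" using I by (auto simp: Inv_def)
    have "Lst a = Lst (modv c)" using h1 Cc by (auto simp: conf_def split: if_splits)
    then have am: "a = modv c" using Lst_inj a modv_A[OF c(1)] by blast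
    have lt: "c i < x i" using h2 Cc ne i by (auto simp: conf_def)
    have rq2: "r = fst (rx a i)" "q = snd (rx a i)" using rqe by (metis fst_conv, metis snd_conv)
    have "C' = conf x (c(i := c i + 1))" using rq2 step_rx[of c i x, OF c(1) i lt] C' rqe am Cc by simp
    moreover have "c(i := c i + 1) \<in> vecs d" using c(1) i by (auto simp: vecs_def)
    moreover have "c(i := c i + 1) \<le> x" using c(2) lt by (auto simp: le_fun_def)
    ultimately show ?thesis by (auto simp: Inv_def)
  qed
qed

lemma inv_reach:
  assumes x: "x \<in> vecs d" and r: "reachable Rs (ini x) C"
  shows "Inv x C"
  using r unfolding reachable_def
proof (induction rule: rtranclp_induct)
  case base then show ?case by (simp add: Inv_def)
next
  case (step y z) then show ?case using inv_step[OF x] by blast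
qed

lemma reach_final:
  assumes x: "x \<in> vecs d"
  shows "\<forall>c. c \<in> vecs d \<longrightarrow> c \<le> x \<longrightarrow> (\<Sum>j<d. x j - c j) = n \<longrightarrow> reachable Rs (conf x c) (conf x x)"
proof (induction n)
  case 0
  show ?case
  proof (intro allI impI)
    fix c assume c: "c \<in> vecs d" "c \<le> x" "(\<Sum>j<d. x j - c j) = 0"
    have "c = x"
    proof
      fix j show "c j = x j"
      proof (cases "j < d")
        case True
        have "x j \<le> c j" using c(3) True by simp
        moreover have "c j \<le> x j" using c(2) by (simp add: le_fun_def)
        ultimately show ?thesis by simp
      next
        case False then show ?thesis using c x by (simp add: vecs_def)
      qed
    qed
    then show "reachable Rs (conf x c) (conf x x)" by (simp add: reachable_def)
  qed
next
  case (Suc n)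
  show ?case
  proof (intro allI impI)
    fix c assume c: "c \<in> vecs d" "c \<le> x" "(\<Sum>j<d. x j - c j) = Suc n"
    then obtain i where i: "i < d" "x i - c i \<noteq> 0" by (metis (mono_tags, lifting) lessThan_iff sum.neutral nat.distinct(1))
    then have lt: "c i < x i" by simp
    define c' where "c' = c(i := c i + 1)"
    have c'v: "c' \<in> vecs d" using c(1) i by (auto simp: vecs_def c'_def)
    have c'le: "c' \<le> x" using c(2) lt by (auto simp: le_fun_def c'_def)
    have "(\<Sum>j<d. x j - c j) = (\<Sum>j<d. (x j - c' j) + (if j = i then 1 else 0))"
      using lt by (intro sum.cong) (auto simp: c'_def)
    also have "\<dots> = (\<Sum>j<d. x j - c' j) + 1" using i by (simp add: sum.distrib)
    finally have "(\<Sum>j<d. x j - c' j) = n" using c(3) by simp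
    then have r2: "reachable Rs (conf x c') (conf x x)" using Suc.IH c'v c'le by blast
    have "rx (modv c) i \<in> Rs" using modv_A[OF c(1)] i by (force simp: Rs_def)
    then have "crn_step Rs (conf x c) (conf x c')"
      using step_rx[of c i x, OF c(1) i(1) lt] unfolding crn_step_def c'_def
      by (intro bexI[of _ "rx (modv c) i"]) (auto split: prod.splits)
    then show "reachable Rs (conf x c) (conf x x)" using r2 unfolding reachable_def
      by (rule converse_rtranclp_into_rtranclp)
  qed
qed

lemma final_stable:
  "stable Rs 0 (conf x x)"
proof -
  have "\<not> crn_step Rs (conf x x) C'" for C'
  proof
    assume "crn_step Rs (conf x x) C'"
    then obtain r q where rq: "(r, q) \<in> Rs" and le: "r \<le> conf x x" by (auto simp: crn_step_def)
    show False
    proof (cases "(r, q) = start")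
      case True
      then have "r 1 \<le> conf x x 1" using le by (simp add: le_fun_def)
      then show False using True by (simp add: start_def conf_def)
    next
      case False
      then obtain a i where i: "i < d" and rqe: "(r, q) = rx a i"
        using rq by (auto simp: Rs_def)
      have ne: "Lst b \<noteq> i + 2" for b using Lst_ge[of b] i by linarith
      have "r (i+2) \<le> conf x x (i+2)" using le by (simp add: le_fun_def)
      then show False using rqe ne i by (simp add: rx_def conf_def)
    qed
  qed
  then have "reachable Rs (conf x x) C' \<Longrightarrow> C' = conf x x" for C'
    unfolding reachable_def by (auto elim: converse_rtranclpE)
  then show ?thesis by (auto simp: stable_def)
qed


lemma init_eq: "init_config d (\<lambda>i. i + 2) 1 x = ini x"
proof
  fix s
  have "(\<Sum>i<d. if i + 2 = s then x i else 0) = (if 2 \<le> s \<and> s < d + 2 then x (s - 2) else 0)"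
  proof (cases "2 \<le> s \<and> s < d + 2")
    case True
    then have "(\<Sum>i<d. if i + 2 = s then x i else 0) = (\<Sum>i<d. if i = s - 2 then x i else 0)"
      by (intro sum.cong) auto
    also have "\<dots> = x (s - 2)" using True by (simp add: sum.delta less_diff_conv2)
    finally show ?thesis using True by simp
  next
    case False
    then have "(\<Sum>i<d. if i + 2 = s then x i else 0) = 0"
      by (intro sum.neutral) auto
    then show ?thesis by (simp only: if_not_P[OF False])
  qed
  then show "init_config d (\<lambda>i. i + 2) 1 x s = ini x s"
    by (auto simp: init_config_def ini_def)
qed

lemma reach_to_final:
  assumes x: "x \<in> vecs d" and c: "c \<in> vecs d" "c \<le> x"
  shows "reachable Rs (conf x c) (conf x x)"
  using reach_final[OF x] c by blast

lemma main: "output_oblivious Rs 0 \<and> stably_computes Ss Rs d (\<lambda>i. i + 2) 0 1 g"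
proof
  have o1: "fst start 0 = 0" by (simp add: start_def)
  have o2: "fst (rx a i) 0 = 0" for a i by (simp add: rx_def)
  have oz: "fst z 0 = 0" if "z \<in> Rs" for z
    using that o1 o2 unfolding Rs_def by auto
  show "output_oblivious Rs 0"
    unfolding output_oblivious_def using oz by fastforce
  have fR: "finite Rs" using finite_resA by (simp add: Rs_def)
  have fS: "finite Ss" using finite_resA by (simp add: Ss_def)
  have w1: "fst start s = 0 \<and> snd start s = 0" if "s \<notin> Ss" for s
  proof -
    have "s \<noteq> 1" "s \<noteq> 0" "s \<noteq> Lst (\<lambda>_. 0)" using that zero_A by (auto simp: Ss_def)
    then show ?thesis by (simp add: start_def)
  qed
  have w2: "fst (rx a i) s = 0 \<and> snd (rx a i) s = 0" if "s \<notin> Ss" "a \<in> resA d p" "i < d" for s a i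
  proof -
    have "s \<noteq> Lst a" "s \<noteq> i + 2" "s \<noteq> 0" "s \<noteq> Lst (nxt a i)"
      using that nxt_A[OF that(2,3)] by (auto simp: Ss_def)
    then show ?thesis by (simp add: rx_def)
  qed
  have wz: "fst z s = 0 \<and> snd z s = 0" if "z \<in> Rs" "s \<notin> Ss" for z s
    using that w1 w2 unfolding Rs_def by auto
  have wf: "\<forall>(r, q)\<in>Rs. \<forall>s. s \<notin> Ss \<longrightarrow> r s = 0 \<and> q s = 0"
    using wz by fastforce
  have comp: "\<forall>x\<in>vecs d. \<forall>C. reachable Rs (init_config d (\<lambda>i. i + 2) 1 x) C \<longrightarrow>
        (\<exists>D. reachable Rs C D \<and> stable Rs 0 D \<and> D 0 = g x)"
  proof (intro ballI allI impI)
    fix x C assume x: "x \<in> vecs d" and r: "reachable Rs (init_config d (\<lambda>i. i + 2) 1 x) C"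
    have I: "Inv x C" using inv_reach[OF x] r init_eq by simp
    have "reachable Rs C (conf x x)"
    proof (cases "C = ini x")
      case True
      have z: "(\<lambda>_. 0) \<in> vecs d" "(\<lambda>_. 0::nat) \<le> x" by (auto simp: vecs_def le_fun_def)
      have "crn_step Rs (ini x) (conf x (\<lambda>_. 0))"
        using step_start[OF x] unfolding crn_step_def
        by (intro bexI[of _ start]) (auto simp: Rs_def split: prod.splits)
      then show ?thesis using True reach_to_final[OF x z] unfolding reachable_def
        by (simp add: converse_rtranclp_into_rtranclp)
    next
      case False
      then obtain c where "c \<in> vecs d" "c \<le> x" "C = conf x c" using I by (auto simp: Inv_def)
      then show ?thesis using reach_to_final[OF x] by simp
    qed
    moreover have "conf x x 0 = g x" by (simp add: conf_def)
    ultimately show "\<exists>D. reachable Rs C D \<and> stable Rs 0 D \<and> D 0 = g x"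
      using final_stable by blast
  qed
  show "stably_computes Ss Rs d (\<lambda>i. i + 2) 0 1 g"
  proof -
    have a: "(\<lambda>i. i + 2) ` {..<d} \<subseteq> Ss" by (auto simp: Ss_def)
    have b: "inj_on (\<lambda>i::nat. i + 2) {..<d}" by (simp add: inj_on_def)
    have c: "(0::nat) \<in> Ss" "(1::nat) \<in> Ss" by (auto simp: Ss_def)
    have e: "(0::nat) \<notin> (\<lambda>i. i + 2) ` {..<d}" "(1::nat) \<notin> (\<lambda>i. i + 2) ` {..<d}" by auto
    show ?thesis unfolding stably_computes_def crn_wf_def
      by (intro conjI fS fR wf a b c e comp) simp
  qed
qed

end

theorem lemma14:
  fixes d :: nat and g :: "(nat \<Rightarrow> nat) \<Rightarrow> nat"
  assumes "quilt_affine d g"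
  shows "obliviously_computable d g"
proof -
  have mono: "\<forall>x\<in>vecs d. \<forall>y\<in>vecs d. x \<le> y \<longrightarrow> g x \<le> g y"
    using assms unfolding quilt_affine_def by (elim conjE)
  from assms obtain p and grad :: "nat \<Rightarrow> rat" and B :: "(nat \<Rightarrow> nat) \<Rightarrow> rat" where pp: "p > 0"
    and eq: "\<forall>x\<in>vecs d. of_nat (g x) = (\<Sum>i<d. grad i * of_nat (x i)) + B (\<lambda>i. x i mod p)"
    unfolding quilt_affine_def by (elim conjE exE) blast
  obtain f :: "(nat \<Rightarrow> nat) \<Rightarrow> nat" and n where "f ` resA d p = {i. i < n} \<and> inj_on f (resA d p)"
    using finite_imp_inj_to_nat_seg[OF finite_resA] by blast
  then have fi: "inj_on f (resA d p)" by blast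
  interpret qa d g p grad B f using mono pp eq fi by unfold_locales
  show ?thesis unfolding obliviously_computable_def using main by blast
qed

end
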